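(* Let $\mathbf{S} = [s_{ij}] \in \mathbb{R}^{m_q \times m}$ be the similarity matrix between a query vector set $\mathbf{Q}=\{\mathbf{q}_1,\dots,\mathbf{q}_{m_q}\}$ and a target vector set $\mathbf{T}=\{\mathbf{t}_1,\dots,\mathbf{t}_m\}$, with entries $s_{ij}\in[0,1]$, and let $s_{\min} = \min_{i,j} s_{ij}$. Let $\hat{\mathbf{S}} = [\hat S_{ij}]$ be the estimated similarity matrix obtained from $L \in \mathbb{Z}^+$ hash functions of a locality-sensitive hashing family (so that each estimated entry $\hat S_{ij}$ is distributed as $L^{-1}\mathcal{B}(s_{ij}, L)$, i.e. $L\hat S_{ij}$ is binomial with $L$ trials and success probability $s_{ij}$). Let $\tau_2 \in (0, s_{\min})$ and $\Delta_2 = s_{\min} - \tau_2$. Then $$\Pr\big[\sigma(\hat{\mathbf{S}}) \leq s_{\min} - \Delta_2\big] \leq m_q m\, \xi^L, \qquad \text{where } \xi = \left(\frac{s_{\min}(1-\tau_2)}{\tau_2(1-s_{\min})}\right)^{\tau_2}\left(\frac{1-s_{\min}}{1-\tau_2}\right),$$ and $\sigma(\mathbf{A}) = \min\big(\min_i \max_j a_{ij}, \min_j \max_i a_{ij}\big)$ for a matrix $\mathbf{A}=[a_{ij}] \in \mathbb{R}^{m_q\times m}$.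
   Context: A locality-sensitive hash function $h$ satisfies $\Pr(h(\mathbf{a})=h(\mathbf{b})) = \operatorname{sim}(\mathbf{a},\mathbf{b}) \in [0,1]$. With $L$ such hash functions, the estimated similarity of a pair of vectors is the fraction of the $L$ hash functions on which they collide, hence a scaled binomial $L^{-1}\mathcal{B}(\operatorname{sim}, L)$. Vectors are $L2$-normalized and $\operatorname{sim}(\mathbf{q},\mathbf{v}) = \mathbf{q}^T\mathbf{v}$. *)

theory Defs
  imports "HOL-Probability.Probability"
begin

text \<open>Matrices A in R^(mq x m) are represented as functions nat => nat => real,
  with row indices i < mq and column indices j < m.\<close>

definition sigma_mat :: "nat \<Rightarrow> nat \<Rightarrow> (nat \<Rightarrow> nat \<Rightarrow> real) \<Rightarrow> real" where
  "sigma_mat mq m A =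
     min (Min ((\<lambda>i. Max ((\<lambda>j. A i j) ` {..<m})) ` {..<mq}))
         (Min ((\<lambda>j. Max ((\<lambda>i. A i j) ` {..<mq})) ` {..<m}))"

definition xi_bound :: "real \<Rightarrow> real \<Rightarrow> real" where
  "xi_bound smin tau2 =
     ((smin * (1 - tau2)) / (tau2 * (1 - smin))) powr tau2 * ((1 - smin) / (1 - tau2))"

end

theory Submission
  imports Defs
begin

lemma binom_prob_sum:
  assumes "0 \<le> p" "p \<le> 1"
  shows "measure_pmf.prob (binomial_pmf n p) A
     = (\<Sum>k\<in>A \<inter> {..n}. real (n choose k) * p^k * (1-p)^(n-k))"
proof -
  have sub: "set_pmf (binomial_pmf n p) \<subseteq> {..n}"
    using assms by (subst set_pmf_binomial_eq) auto
  have "measure_pmf.prob (binomial_pmf n p) A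
      = measure_pmf.prob (binomial_pmf n p) (A \<inter> set_pmf (binomial_pmf n p))"
    by (simp add: measure_Int_set_pmf)
  also have "A \<inter> set_pmf (binomial_pmf n p) = (A \<inter> {..n}) \<inter> set_pmf (binomial_pmf n p)"
    using sub by blast
  also have "measure_pmf.prob (binomial_pmf n p) \<dots> = measure_pmf.prob (binomial_pmf n p) (A \<inter> {..n})"
    by (simp add: measure_Int_set_pmf)
  also have "\<dots> = (\<Sum>k\<in>A \<inter> {..n}. pmf (binomial_pmf n p) k)"
    by (simp add: measure_measure_pmf_finite)
  finally show ?thesis using assms by simp
qed

lemma binom_tail:
  assumes "0 \<le> p" "p \<le> 1" "0 < lam" "lam \<le> 1"
  shows "measure_pmf.prob (binomial_pmf n p) {k. real k \<le> a}
     \<le> (1 - p + p * lam)^n / lam powr a"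
proof -
  have "measure_pmf.prob (binomial_pmf n p) {k. real k \<le> a}
     = (\<Sum>k\<in>{k. real k \<le> a} \<inter> {..n}. real (n choose k) * p^k * (1-p)^(n-k))"
    by (rule binom_prob_sum[OF assms(1,2)])
  also have "\<dots> \<le> (\<Sum>k\<in>{k. real k \<le> a} \<inter> {..n}. real (n choose k) * p^k * (1-p)^(n-k) * (lam^k / lam powr a))"
  proof (rule sum_mono)
    fix k assume k: "k \<in> {k. real k \<le> a} \<inter> {..n}"
    have "lam powr a \<le> lam powr real k"
      using k assms by (intro powr_mono') auto
    hence "1 \<le> lam^k / lam powr a" using assms by (simp add: powr_realpow)
    moreover have "0 \<le> real (n choose k) * p^k * (1-p)^(n-k)" using assms by simp
    ultimately show "real (n choose k) * p^k * (1-p)^(n-k) \<le> real (n choose k) * p^k * (1-p)^(n-k) * (lam^k / lam powr a)"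
      using mult_left_mono[of 1 "lam^k / lam powr a" "real (n choose k) * p^k * (1-p)^(n-k)"] by simp
  qed
  also have "\<dots> \<le> (\<Sum>k\<in>{..n}. real (n choose k) * p^k * (1-p)^(n-k) * (lam^k / lam powr a))"
    using assms by (intro sum_mono2) auto
  also have "\<dots> = (\<Sum>k\<le>n. real (n choose k) * (p*lam)^k * (1-p)^(n-k)) / lam powr a"
    unfolding sum_divide_distrib by (intro sum.cong refl) (simp add: power_mult_distrib)
  also have "\<dots> = (p*lam + (1-p))^n / lam powr a"
    by (subst binomial_ring) simp
  finally show ?thesis by (simp add: algebra_simps)
qed

lemma entry_bound:
  assumes P: "prob_space M" and X: "X \<in> borel_measurable M"
    and D: "distr M borel X = distr (measure_pmf (binomial_pmf L s)) borel (\<lambda>k. real k / real L)"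
    and L: "L \<ge> 1" and s: "smin \<le> s" "s \<le> 1" and t: "0 < tau2" "tau2 < smin"
  shows "measure M {\<omega> \<in> space M. X \<omega> \<le> tau2} \<le> xi_bound smin tau2 ^ L"
proof -
  have s0: "0 \<le> s" using s t by linarith
  have "measure M {\<omega> \<in> space M. X \<omega> \<le> tau2} = measure (distr M borel X) {..tau2}"
    using X by (subst measure_distr) (auto intro!: arg_cong[where f="measure M"])
  also have "\<dots> = measure (distr (measure_pmf (binomial_pmf L s)) borel (\<lambda>k. real k / real L)) {..tau2}"
    using D by simp
  also have "\<dots> = measure_pmf.prob (binomial_pmf L s) {k. real k \<le> tau2 * real L}"
    using L by (subst measure_distr) (auto simp: field_simps intro!: arg_cong[where f="measure _"])
  finally have eq: "measure M {\<omega> \<in> space M. X \<omega> \<le> tau2} = measure_pmf.prob (binomial_pmf L s) {k. real k \<le> tau2 * real L}" .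
  have xi0: "0 \<le> xi_bound smin tau2"
    unfolding xi_bound_def using s t by (intro mult_nonneg_nonneg divide_nonneg_nonneg) auto
  show ?thesis
  proof (cases "s = 1")
    case True
    have "measure_pmf.prob (binomial_pmf L s) {k. real k \<le> tau2 * real L} = 0"
    proof -
      have "measure_pmf.prob (binomial_pmf L s) {k. real k \<le> tau2 * real L}
        = (\<Sum>k\<in>{k. real k \<le> tau2 * real L} \<inter> {..L}. real (L choose k) * s^k * (1-s)^(L-k))"
        by (rule binom_prob_sum) (use s0 s in auto)
      also have "\<dots> = 0"
      proof (rule sum.neutral, rule ballI)
        fix k assume k: "k \<in> {k. real k \<le> tau2 * real L} \<inter> {..L}"
        have "tau2 * real L < real L" using t s L by (simp add: True)
        hence "k < L" using k by auto
        thus "real (L choose k) * s^k * (1-s)^(L-k) = 0" using True by simp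
      qed
      finally show ?thesis .
    qed
    thus ?thesis using eq xi0 by simp
  next
    case False
    hence s1: "smin < 1" using s by linarith
    define lam where "lam = tau2 * (1 - smin) / (smin * (1 - tau2))"
    have lam0: "0 < lam" unfolding lam_def using t s1 by (auto intro!: divide_pos_pos mult_pos_pos)
    have "tau2 * (1 - smin) < smin * (1 - tau2)" using t by (simp add: algebra_simps)
    hence lam1: "lam < 1" unfolding lam_def using t s1 by (subst divide_less_eq_1) auto
    have "measure_pmf.prob (binomial_pmf L s) {k. real k \<le> tau2 * real L}
       \<le> (1 - s + s * lam)^L / lam powr (tau2 * real L)"
      by (rule binom_tail) (use s0 s lam0 lam1 in auto)
    also have "\<dots> \<le> (1 - smin + smin * lam)^L / lam powr (tau2 * real L)"
    proof (intro divide_right_mono power_mono)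
      show "1 - s + s * lam \<le> 1 - smin + smin * lam"
        using mult_right_mono[OF s(1), of "1 - lam"] lam1 by (simp add: algebra_simps)
      have "s * (1 - lam) \<le> 1 * 1" using s s0 lam0 lam1 by (intro mult_mono) auto
      thus "0 \<le> 1 - s + s * lam" by (simp add: algebra_simps)
    qed simp
    also have "\<dots> = ((1 - smin + smin * lam) / lam powr tau2)^L"
    proof -
      have "lam powr (tau2 * real L) = (lam powr tau2) ^ L"
        using lam0 by (simp add: powr_powr[symmetric] powr_realpow)
      thus ?thesis by (simp add: power_divide)
    qed
    also have "(1 - smin + smin * lam) / lam powr tau2 = xi_bound smin tau2"
    proof -
      have a: "1 - smin + smin * lam = (1 - smin) / (1 - tau2)"
        unfolding lam_def using t s1 by (simp add: field_simps)
      have b: "smin * (1 - tau2) / (tau2 * (1 - smin)) = 1 / lam"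
        unfolding lam_def by simp
      show ?thesis unfolding xi_bound_def a b using lam0
        by (simp add: powr_divide)
    qed
    finally show ?thesis using eq by simp
  qed
qed

lemma sigma_small:
  assumes "mq \<ge> 1" "m \<ge> 1" "sigma_mat mq m A \<le> t"
  shows "\<exists>i<mq. \<exists>j<m. A i j \<le> t"
proof -
  have ne: "{..<mq} \<noteq> {}" "{..<m} \<noteq> {}" using assms by (auto simp: lessThan_empty_iff)
  from assms(3) consider
     "Min ((\<lambda>i. Max ((\<lambda>j. A i j) ` {..<m})) ` {..<mq}) \<le> t"
   | "Min ((\<lambda>j. Max ((\<lambda>i. A i j) ` {..<mq})) ` {..<m}) \<le> t"
    unfolding sigma_mat_def by linarith
  thus ?thesis
  proof cases
    case 1
    then obtain i where i: "i < mq" "Max ((\<lambda>j. A i j) ` {..<m}) \<le> t"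
      using ne by (subst (asm) Min_le_iff) auto
    have "A i 0 \<le> Max ((\<lambda>j. A i j) ` {..<m})" using assms(2) by (intro Max_ge) auto
    hence "A i 0 \<le> t" using i by linarith
    moreover have "0 < m" using assms(2) by simp
    ultimately show ?thesis using i by blast
  next
    case 2
    then obtain j where j: "j < m" "Max ((\<lambda>i. A i j) ` {..<mq}) \<le> t"
      using ne by (subst (asm) Min_le_iff) auto
    have "A 0 j \<le> Max ((\<lambda>i. A i j) ` {..<mq})" using assms(1) by (intro Max_ge) auto
    hence "A 0 j \<le> t" using j by linarith
    moreover have "0 < mq" using assms(1) by simp
    ultimately show ?thesis using j by blast
  qed
qed

theorem lemma3:
  fixes M :: "'a measure"
    and mq m L :: nat
    and s :: "nat \<Rightarrow> nat \<Rightarrow> real"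
    and Shat :: "nat \<Rightarrow> nat \<Rightarrow> 'a \<Rightarrow> real"
    and tau2 :: real
  assumes "prob_space M"
    and "mq \<ge> 1" and "m \<ge> 1" and "L \<ge> 1"
    and "\<And>i j. i < mq \<Longrightarrow> j < m \<Longrightarrow> s i j \<in> {0..1}"
    and "\<And>i j. i < mq \<Longrightarrow> j < m \<Longrightarrow> Shat i j \<in> borel_measurable M"
    and "\<And>i j. i < mq \<Longrightarrow> j < m \<Longrightarrow>
           distr M borel (Shat i j) =
           distr (measure_pmf (binomial_pmf L (s i j))) borel (\<lambda>k. real k / real L)"
    and "0 < tau2"
    and "tau2 < Min {s i j | i j. i < mq \<and> j < m}"
  shows "measure M {\<omega> \<in> space M.
            sigma_mat mq m (\<lambda>i j. Shat i j \<omega>)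
              \<le> Min {s i j | i j. i < mq \<and> j < m}
                 - (Min {s i j | i j. i < mq \<and> j < m} - tau2)}
         \<le> real mq * real m * xi_bound (Min {s i j | i j. i < mq \<and> j < m}) tau2 ^ L"
proof -
  interpret prob_space M by fact
  define S where "S = {s i j | i j. i < mq \<and> j < m}"
  define smin where "smin = Min S"
  define I where "I = {..<mq} \<times> {..<m}"
  have SI: "S = (\<lambda>(i,j). s i j) ` I" unfolding S_def I_def by auto
  have finS: "finite S" and neS: "S \<noteq> {}" using SI assms(2,3) unfolding I_def by (auto simp: lessThan_empty_iff)
  have le: "smin \<le> s i j" if "i < mq" "j < m" for i j
    unfolding smin_def using finS that by (intro Min_le) (auto simp: S_def)
  have sub: "{\<omega> \<in> space M. sigma_mat mq m (\<lambda>i j. Shat i j \<omega>) \<le> smin - (smin - tau2)}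
      \<subseteq> (\<Union>(i,j)\<in>I. {\<omega> \<in> space M. Shat i j \<omega> \<le> tau2})"
  proof
    fix \<omega> assume "\<omega> \<in> {\<omega> \<in> space M. sigma_mat mq m (\<lambda>i j. Shat i j \<omega>) \<le> smin - (smin - tau2)}"
    hence w: "\<omega> \<in> space M" "sigma_mat mq m (\<lambda>i j. Shat i j \<omega>) \<le> tau2" by auto
    from sigma_small[OF assms(2,3) w(2)] obtain i j where "i < mq" "j < m" "Shat i j \<omega> \<le> tau2" by blast
    thus "\<omega> \<in> (\<Union>(i,j)\<in>I. {\<omega> \<in> space M. Shat i j \<omega> \<le> tau2})" using w(1) unfolding I_def by blast
  qed
  have meas: "(\<lambda>(i,j). {\<omega> \<in> space M. Shat i j \<omega> \<le> tau2}) ` I \<subseteq> sets M"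
  proof clarify
    fix i j assume "(i,j) \<in> I"
    hence "i < mq" "j < m" unfolding I_def by auto
    hence [measurable]: "Shat i j \<in> borel_measurable M" by (rule assms(6))
    show "{\<omega> \<in> space M. Shat i j \<omega> \<le> tau2} \<in> sets M" by measurable
  qed
  hence "measure M {\<omega> \<in> space M. sigma_mat mq m (\<lambda>i j. Shat i j \<omega>) \<le> smin - (smin - tau2)}
      \<le> measure M (\<Union>(i,j)\<in>I. {\<omega> \<in> space M. Shat i j \<omega> \<le> tau2})"
    using meas sub unfolding I_def by (intro finite_measure_mono) auto
  also have "\<dots> \<le> (\<Sum>p\<in>I. measure M ((\<lambda>(i,j). {\<omega> \<in> space M. Shat i j \<omega> \<le> tau2}) p))"
    by (rule finite_measure_subadditive_finite[OF _ meas]) (simp add: I_def)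
  also have "\<dots> = (\<Sum>(i,j)\<in>I. measure M {\<omega> \<in> space M. Shat i j \<omega> \<le> tau2})"
    by (intro sum.cong) auto
  also have "\<dots> \<le> (\<Sum>(i,j)\<in>I. xi_bound smin tau2 ^ L)"
  proof (intro sum_mono, clarify)
    fix i j assume "(i, j) \<in> I"
    hence ij: "i < mq" "j < m" unfolding I_def by auto
    show "measure M {\<omega> \<in> space M. Shat i j \<omega> \<le> tau2} \<le> xi_bound smin tau2 ^ L"
      by (rule entry_bound[OF assms(1) assms(6)[OF ij] assms(7)[OF ij] assms(4) le[OF ij]])
         (use assms(5)[OF ij] assms(8,9) in \<open>auto simp: smin_def S_def\<close>)
  qed
  also have "\<dots> = real mq * real m * xi_bound smin tau2 ^ L"
    unfolding I_def by simp
  finally show ?thesis unfolding smin_def S_def .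
qed

end
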